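(* Let $G$ be a graph formed from the claw $K_{1,3}$ by subdividing a single edge $0$ or more times. If $L$ is a list-assignment with $|L(v)|\ge\deg(v)+1$ for all $v\in V(G)$ and $\alpha,\beta$ are unfrozen $L$-colourings, then $\alpha\sim\beta$.
   Context: An $L$-colouring is a proper colouring $\varphi$ with $\varphi(v)\in L(v)$ for all $v$. A vertex $v$ is frozen under $\varphi$ if every colour of $L(v)\setminus\{\varphi(v)\}$ appears on a neighbour of $v$; a colouring is unfrozen if at least one vertex is not frozen. $\alpha\sim\beta$ means $\alpha$ can be transformed into $\beta$ by a sequence of single-vertex recolouring steps, each keeping the colouring a proper $L$-colouring. *)

theory Defs
  imports Main
begin

definition degree :: "'a set \<Rightarrow> ('a \<Rightarrow> 'a \<Rightarrow> bool) \<Rightarrow> 'a \<Rightarrow> nat" where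
  "degree V E v = card {u \<in> V. E v u}"

text \<open>Proper L-colouring (only values on V matter).\<close>
definition L_colouring :: "'a set \<Rightarrow> ('a \<Rightarrow> 'a \<Rightarrow> bool) \<Rightarrow> ('a \<Rightarrow> 'c set) \<Rightarrow> ('a \<Rightarrow> 'c) \<Rightarrow> bool" where
  "L_colouring V E L \<phi> \<longleftrightarrow>
     (\<forall>v\<in>V. \<phi> v \<in> L v) \<and> (\<forall>u\<in>V. \<forall>v\<in>V. E u v \<longrightarrow> \<phi> u \<noteq> \<phi> v)"

definition frozen_at :: "'a set \<Rightarrow> ('a \<Rightarrow> 'a \<Rightarrow> bool) \<Rightarrow> ('a \<Rightarrow> 'c set) \<Rightarrow> ('a \<Rightarrow> 'c) \<Rightarrow> 'a \<Rightarrow> bool" where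
  "frozen_at V E L \<phi> v \<longleftrightarrow> (\<forall>c \<in> L v - {\<phi> v}. \<exists>u\<in>V. E v u \<and> \<phi> u = c)"

definition unfrozen :: "'a set \<Rightarrow> ('a \<Rightarrow> 'a \<Rightarrow> bool) \<Rightarrow> ('a \<Rightarrow> 'c set) \<Rightarrow> ('a \<Rightarrow> 'c) \<Rightarrow> bool" where
  "unfrozen V E L \<phi> \<longleftrightarrow> (\<exists>v\<in>V. \<not> frozen_at V E L \<phi> v)"

definition recol_step :: "'a set \<Rightarrow> ('a \<Rightarrow> 'a \<Rightarrow> bool) \<Rightarrow> ('a \<Rightarrow> 'c set) \<Rightarrow> ('a \<Rightarrow> 'c) \<Rightarrow> ('a \<Rightarrow> 'c) \<Rightarrow> bool" where
  "recol_step V E L \<alpha> \<beta> \<longleftrightarrow> L_colouring V E L \<alpha> \<and> L_colouring V E L \<beta> \<and>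
     (\<exists>v\<in>V. \<forall>u\<in>V. u \<noteq> v \<longrightarrow> \<alpha> u = \<beta> u)"

definition reconf_equiv :: "'a set \<Rightarrow> ('a \<Rightarrow> 'a \<Rightarrow> bool) \<Rightarrow> ('a \<Rightarrow> 'c set) \<Rightarrow> ('a \<Rightarrow> 'c) \<Rightarrow> ('a \<Rightarrow> 'c) \<Rightarrow> bool" where
  "reconf_equiv V E L \<alpha> \<beta> \<longleftrightarrow> (recol_step V E L)\<^sup>*\<^sup>* \<alpha> \<beta>"

text \<open>The claw K_{1,3} with the edge 0--3 subdivided k times, on vertices {0..k+3}:
  centre 0, leaves 1 and 2, path 0 - 3 - 4 - ... - (k+3).\<close>
definition subdiv_claw_edge :: "nat \<Rightarrow> nat \<Rightarrow> nat \<Rightarrow> bool" where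
  "subdiv_claw_edge k i j \<longleftrightarrow>
     (min i j = 0 \<and> max i j \<in> {1,2,3}) \<or>
     (3 \<le> min i j \<and> max i j = min i j + 1 \<and> max i j \<le> k + 3)"

end

theory Submission
  imports Defs
begin

lemma colouring_subset: "L_colouring S E L \<phi> \<Longrightarrow> S' \<subseteq> S \<Longrightarrow> L_colouring S' E L \<phi>"
  unfolding L_colouring_def by blast

lemma colouring_irrefl: "L_colouring S E L \<phi> \<Longrightarrow> v \<in> S \<Longrightarrow> \<not> E v v"
  unfolding L_colouring_def by blast

lemma recolour:
  assumes col: "L_colouring S E L \<phi>" and v: "v \<in> S" and c: "c \<in> L v"
    and free: "\<forall>u\<in>S. E v u \<longrightarrow> \<phi> u \<noteq> c"
    and sym: "\<forall>u\<in>S. \<forall>w\<in>S. E u w \<longrightarrow> E w u"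
  shows "L_colouring S E L (\<phi>(v := c))" "recol_step S E L \<phi> (\<phi>(v := c))"
proof -
  show 1: "L_colouring S E L (\<phi>(v := c))"
    unfolding L_colouring_def
  proof (intro conjI ballI impI)
    fix w assume "w \<in> S" then show "(\<phi>(v := c)) w \<in> L w"
      using col c unfolding L_colouring_def by auto
  next
    fix a b assume ab: "a \<in> S" "b \<in> S" "E a b"
    show "(\<phi>(v := c)) a \<noteq> (\<phi>(v := c)) b"
    proof (cases "a = v")
      case True
      then have "b \<noteq> v" using colouring_irrefl[OF col v] ab by auto
      then show ?thesis using True ab free by auto
    next
      case False
      show ?thesis
      proof (cases "b = v")
        case True
        then have "E v a" using sym ab by auto
        then show ?thesis using True False ab free by auto
      next
        case False2: False
        then show ?thesis using False ab col unfolding L_colouring_def by auto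
      qed
    qed
  qed
  show "recol_step S E L \<phi> (\<phi>(v := c))"
    unfolding recol_step_def using 1 col v by auto
qed

lemma recol_sym: "recol_step S E L a b \<Longrightarrow> recol_step S E L b a"
  unfolding recol_step_def by metis

lemma rt_sym: "(recol_step S E L)\<^sup>*\<^sup>* a b \<Longrightarrow> (recol_step S E L)\<^sup>*\<^sup>* b a"
proof (induction rule: rtranclp_induct)
  case base then show ?case by simp
next
  case (step b c)
  then show ?case by (meson converse_rtranclp_into_rtranclp recol_sym)
qed

lemma agree_step:
  "L_colouring S E L \<phi> \<Longrightarrow> L_colouring S E L \<psi> \<Longrightarrow> v \<in> S \<Longrightarrow> \<forall>u\<in>S. u \<noteq> v \<longrightarrow> \<phi> u = \<psi> u
   \<Longrightarrow> recol_step S E L \<phi> \<psi>"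
  unfolding recol_step_def by blast

lemma rt_col: "(recol_step S E L)\<^sup>*\<^sup>* a b \<Longrightarrow> L_colouring S E L a \<Longrightarrow> L_colouring S E L b"
  by (induction rule: rtranclp_induct) (auto simp: recol_step_def)

lemma lift:
  assumes fin: "finite S" and sym: "\<forall>u\<in>S. \<forall>w\<in>S. E u w \<longrightarrow> E w u" and v: "v \<in> S"
    and cond: "card (L v) \<ge> card {u\<in>S. E v u} + 2 \<or> {u\<in>S. E v u} = {}"
    and rt: "(recol_step (S - {v}) E L)\<^sup>*\<^sup>* \<alpha> \<delta>"
    and col\<alpha>: "L_colouring S E L \<alpha>"
  shows "\<exists>\<beta>. (recol_step S E L)\<^sup>*\<^sup>* \<alpha> \<beta> \<and> L_colouring S E L \<beta> \<and> (\<forall>u\<in>S-{v}. \<beta> u = \<delta> u)"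
  using rt
proof (induction rule: rtranclp_induct)
  case base then show ?case using col\<alpha> by auto
next
  case (step \<delta> \<delta>')
  from step.IH obtain \<beta> where rt\<beta>: "(recol_step S E L)\<^sup>*\<^sup>* \<alpha> \<beta>" and col\<beta>: "L_colouring S E L \<beta>"
    and ag: "\<forall>u\<in>S-{v}. \<beta> u = \<delta> u" by blast
  from step.hyps(2) obtain w where w: "w \<in> S - {v}" and agree: "\<forall>u\<in>S-{v}. u \<noteq> w \<longrightarrow> \<delta> u = \<delta>' u"
    and col\<delta>': "L_colouring (S-{v}) E L \<delta>'" and col\<delta>: "L_colouring (S-{v}) E L \<delta>"
    unfolding recol_step_def by blast
  define A where "A = \<beta> ` {u\<in>S. E v u} \<union> (if E v w then {\<delta>' w} else {})"
  have finN: "finite {u\<in>S. E v u}" using fin by auto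
  have finA: "finite A" unfolding A_def using finN by auto
  have "\<exists>c. c \<in> L v \<and> c \<notin> A"
  proof (cases "{u\<in>S. E v u} = {}")
    case True
    then have "\<not> E v w" using w by auto
    then have "A = {}" using True by (auto simp: A_def)
    moreover have "\<beta> v \<in> L v" using col\<beta> v by (auto simp: L_colouring_def)
    ultimately show ?thesis by blast
  next
    case False
    with cond have cL: "card (L v) \<ge> card {u\<in>S. E v u} + 2" by auto
    have "card A \<le> card (\<beta> ` {u\<in>S. E v u}) + card (if E v w then {\<delta>' w} else {})"
      unfolding A_def by (rule card_Un_le)
    also have "\<dots> \<le> card {u\<in>S. E v u} + 1"
      using card_image_le[OF finN, of \<beta>] by auto
    finally have "card A < card (L v)" using cL by auto
    then have "\<not> L v \<subseteq> A" using card_mono[OF finA, of "L v"] by linarith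
    then show ?thesis by blast
  qed
  then obtain c where c: "c \<in> L v" "c \<notin> A" by blast
  have free1: "\<forall>u\<in>S. E v u \<longrightarrow> \<beta> u \<noteq> c" using c(2) unfolding A_def by auto
  note r1 = recolour[OF col\<beta> v c(1) free1 sym]
  define \<beta>1 where "\<beta>1 = \<beta>(v := c)"
  have col1: "L_colouring S E L \<beta>1" using r1 \<beta>1_def by simp
  have wS: "w \<in> S" "w \<noteq> v" using w by auto
  have cw: "\<delta>' w \<in> L w" using col\<delta>' w unfolding L_colouring_def by auto
  have free2: "\<forall>u\<in>S. E w u \<longrightarrow> \<beta>1 u \<noteq> \<delta>' w"
  proof (intro ballI impI)
    fix u assume u: "u \<in> S" "E w u"
    show "\<beta>1 u \<noteq> \<delta>' w"
    proof (cases "u = v")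
      case True
      then have "E v w" using sym u wS by auto
      then have "\<delta>' w \<in> A" unfolding A_def by auto
      then show ?thesis using True c(2) \<beta>1_def by auto
    next
      case False
      have "u \<noteq> w" using colouring_irrefl[OF col\<delta>'] u w by auto
      then have "\<beta>1 u = \<delta>' u" using False u ag agree \<beta>1_def by auto
      moreover have "\<delta>' w \<noteq> \<delta>' u"
      proof -
        have "u \<in> S - {v}" using u False by auto
        then show ?thesis using col\<delta>' u w unfolding L_colouring_def by blast
      qed
      ultimately show ?thesis by simp
    qed
  qed
  note r2 = recolour[OF col1 wS(1) cw free2 sym]
  show ?case
  proof (intro exI conjI)
    show "(recol_step S E L)\<^sup>*\<^sup>* \<alpha> (\<beta>1(w := \<delta>' w))"
      using rt\<beta> r1(2) r2(2) \<beta>1_def by (meson rtranclp.rtrancl_into_rtrancl)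
    show "L_colouring S E L (\<beta>1(w := \<delta>' w))" using r2(1) .
    show "\<forall>u\<in>S - {v}. (\<beta>1(w := \<delta>' w)) u = \<delta>' u"
      using ag agree \<beta>1_def by auto
  qed
qed

lemma lemS_gen:
  assumes fin: "finite V" and sym: "\<forall>u\<in>V. \<forall>w\<in>V. E u w \<longrightarrow> E w u"
    and deg: "\<forall>S\<subseteq>V. S \<noteq> {} \<longrightarrow> (\<exists>v\<in>S. card (L v) \<ge> card {u\<in>S. E v u} + 2 \<or> {u\<in>S. E v u} = {})"
  shows "S \<subseteq> V \<Longrightarrow> L_colouring S E L \<alpha> \<Longrightarrow> L_colouring S E L \<gamma> \<Longrightarrow>
     (\<exists>\<gamma>0. (\<forall>u\<in>S. \<gamma>0 u = \<gamma> u) \<and> (recol_step S E L)\<^sup>*\<^sup>* \<alpha> \<gamma>0)"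
proof (induction "card S" arbitrary: S \<alpha> \<gamma> rule: less_induct)
  case less
  show ?case
  proof (cases "S = {}")
    case True then show ?thesis by auto
  next
    case False
    then obtain v where v: "v \<in> S" and cond: "card (L v) \<ge> card {u\<in>S. E v u} + 2 \<or> {u\<in>S. E v u} = {}"
      using deg less.prems(1) by blast
    have finS: "finite S" using fin less.prems(1) finite_subset by blast
    have "card (S - {v}) < card S" using finS v by (meson card_Diff1_less)
    moreover have "S - {v} \<subseteq> V" using less.prems(1) by auto
    moreover have "L_colouring (S - {v}) E L \<alpha>" "L_colouring (S - {v}) E L \<gamma>"
      using less.prems colouring_subset by blast+
    ultimately obtain \<gamma>0 where g0: "\<forall>u\<in>S-{v}. \<gamma>0 u = \<gamma> u" "(recol_step (S - {v}) E L)\<^sup>*\<^sup>* \<alpha> \<gamma>0"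
      using less.hyps by blast
    have symS: "\<forall>u\<in>S. \<forall>w\<in>S. E u w \<longrightarrow> E w u" using sym less.prems(1) by blast
    obtain \<beta> where b: "(recol_step S E L)\<^sup>*\<^sup>* \<alpha> \<beta>" "L_colouring S E L \<beta>" "\<forall>u\<in>S-{v}. \<beta> u = \<gamma>0 u"
      using lift[OF finS symS v cond g0(2) less.prems(2)] by blast
    have "recol_step S E L \<beta> \<gamma>"
      using agree_step[OF b(2) less.prems(3) v] b(3) g0(1) by auto
    then have "(recol_step S E L)\<^sup>*\<^sup>* \<alpha> \<gamma>" using b(1) by (meson rtranclp.rtrancl_into_rtrancl)
    then show ?thesis by blast
  qed
qed

lemma lemS:
  assumes fin: "finite V" and sym: "\<forall>u\<in>V. \<forall>w\<in>V. E u w \<longrightarrow> E w u"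
    and deg: "\<forall>S\<subseteq>V. S \<noteq> {} \<longrightarrow> (\<exists>v\<in>S. card (L v) \<ge> card {u\<in>S. E v u} + 2 \<or> {u\<in>S. E v u} = {})"
    and ne: "V \<noteq> {}"
    and a: "L_colouring V E L \<alpha>" and g: "L_colouring V E L \<gamma>"
  shows "(recol_step V E L)\<^sup>*\<^sup>* \<alpha> \<gamma>"
proof -
  obtain \<gamma>0 where g0: "\<forall>u\<in>V. \<gamma>0 u = \<gamma> u" "(recol_step V E L)\<^sup>*\<^sup>* \<alpha> \<gamma>0"
    using lemS_gen[OF fin sym deg _ a g] by blast
  obtain v where v: "v \<in> V" using ne by blast
  have "L_colouring V E L \<gamma>0" using rt_col[OF g0(2) a] .
  then have "recol_step V E L \<gamma>0 \<gamma>" using agree_step[OF _ g v] g0(1) by auto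
  then show ?thesis using g0(2) by (meson rtranclp.rtrancl_into_rtrancl)
qed

lemma fixv:
  assumes rt: "(recol_step (S - {r}) E L')\<^sup>*\<^sup>* \<phi> \<psi>" and r: "r \<in> S" and x: "x \<in> L r"
    and sub: "\<forall>v\<in>S-{r}. L' v \<subseteq> L v" and nx: "\<forall>v\<in>S-{r}. (E r v \<or> E v r) \<longrightarrow> x \<notin> L' v"
    and irr: "\<not> E r r"
  shows "(recol_step S E L)\<^sup>*\<^sup>* (\<phi>(r:=x)) (\<psi>(r:=x))"
  using rt
proof (induction rule: rtranclp_induct)
  case base then show ?case by simp
next
  case (step \<delta> \<delta>')
  have colx: "L_colouring S E L (d(r:=x))" if cd: "L_colouring (S - {r}) E L' d" for d
    unfolding L_colouring_def
  proof (intro conjI ballI impI)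
    fix v assume "v \<in> S" then show "(d(r := x)) v \<in> L v"
      using cd sub x unfolding L_colouring_def by (cases "v = r") auto
  next
    fix a b assume ab: "a \<in> S" "b \<in> S" "E a b"
    show "(d(r := x)) a \<noteq> (d(r := x)) b"
    proof (cases "a = r")
      case True
      then have "b \<noteq> r" using irr ab by auto
      then show ?thesis using True ab nx cd unfolding L_colouring_def by force
    next
      case False
      then show ?thesis using ab nx cd unfolding L_colouring_def by (cases "b = r") force+
    qed
  qed
  from step.hyps(2) have "L_colouring (S - {r}) E L' \<delta>" "L_colouring (S - {r}) E L' \<delta>'"
    and "\<exists>w\<in>S-{r}. \<forall>u\<in>S-{r}. u \<noteq> w \<longrightarrow> \<delta> u = \<delta>' u" unfolding recol_step_def by auto
  then have "recol_step S E L (\<delta>(r:=x)) (\<delta>'(r:=x))"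
    unfolding recol_step_def using colx by (metis DiffD1 DiffI fun_upd_apply singletonD)
  then show ?case using step.IH by (meson rtranclp.rtrancl_into_rtrancl)
qed

lemma frozen_struct:
  assumes fz: "frozen_at S E L \<phi> x" and xS: "x \<in> S" and fin: "finite S" and finL: "finite (L x)"
    and cd: "card (L x) \<ge> card {u\<in>S. E x u} + 1" and col: "L_colouring S E L \<phi>"
  shows "\<phi> ` {u\<in>S. E x u} = L x - {\<phi> x}" "inj_on \<phi> {u\<in>S. E x u}"
proof -
  let ?N = "{u\<in>S. E x u}"
  have finN: "finite ?N" using fin by auto
  have sub: "L x - {\<phi> x} \<subseteq> \<phi> ` ?N" using fz unfolding frozen_at_def by (smt (verit, best) image_eqI mem_Collect_eq subsetI)
  have px: "\<phi> x \<in> L x" using col xS unfolding L_colouring_def by auto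
  have c1: "card (L x - {\<phi> x}) = card (L x) - 1" using px finL by simp
  have c2: "card (\<phi> ` ?N) \<le> card ?N" using card_image_le[OF finN] .
  have c3: "card (L x - {\<phi> x}) \<le> card (\<phi> ` ?N)" using card_mono[OF _ sub] finN by auto
  have eqc: "card (L x - {\<phi> x}) = card (\<phi> ` ?N)" using c1 c2 c3 cd by linarith
  show "\<phi> ` ?N = L x - {\<phi> x}"
    using card_subset_eq[OF _ sub eqc] finN by auto
  have "card (\<phi> ` ?N) = card ?N" using c1 c2 c3 cd by linarith
  then show "inj_on \<phi> ?N" using finN by (simp add: inj_on_iff_eq_card)
qed

lemma unfreeze:
  assumes fz: "frozen_at S E L \<phi> x" and xS: "x \<in> S" and fin: "finite S" and finL: "finite (L x)"
    and cd: "card (L x) \<ge> card {u\<in>S. E x u} + 1" and col: "L_colouring S E L \<phi>"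
    and w: "w \<in> S" "E x w" and same: "\<psi> x = \<phi> x" and diff: "\<psi> w \<noteq> \<phi> w"
    and oth: "\<forall>u\<in>S. E x u \<longrightarrow> u \<noteq> w \<longrightarrow> \<psi> u = \<phi> u"
  shows "\<not> frozen_at S E L \<psi> x"
proof
  assume fz2: "frozen_at S E L \<psi> x"
  note fs = frozen_struct[OF fz xS fin finL cd col]
  have "\<phi> w \<in> L x - {\<phi> x}" using fs(1) w by blast
  then obtain u where u: "u \<in> S" "E x u" "\<psi> u = \<phi> w" using fz2 same unfolding frozen_at_def by auto
  show False
  proof (cases "u = w")
    case True then show False using u diff by simp
  next
    case False
    then have "\<phi> u = \<phi> w" using oth u by auto
    then have "u = w" using fs(2) u w unfolding inj_on_def by blast
    then show False using False by simp
  qed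
qed


lemma adj_sym: "subdiv_claw_edge k i j = subdiv_claw_edge k j i"
  unfolding subdiv_claw_edge_def by (simp add: min.commute max.commute)

lemma adj_0: "subdiv_claw_edge k 0 j \<longleftrightarrow> j \<in> {1,2,3}"
  unfolding subdiv_claw_edge_def by auto

lemma adj_1: "subdiv_claw_edge k 1 j \<longleftrightarrow> j = 0"
  unfolding subdiv_claw_edge_def by (auto simp: min_def max_def)

lemma adj_2: "subdiv_claw_edge k 2 j \<longleftrightarrow> j = 0"
  unfolding subdiv_claw_edge_def by (auto simp: min_def max_def)

lemma adj_3: "subdiv_claw_edge k 3 j \<longleftrightarrow> j = 0 \<or> (j = 4 \<and> 1 \<le> k)"
  unfolding subdiv_claw_edge_def by (auto simp: min_def max_def)

lemma adj_pred: "4 \<le> j \<Longrightarrow> j \<le> k + 3 \<Longrightarrow> subdiv_claw_edge k j (j - 1)"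
  unfolding subdiv_claw_edge_def by (auto simp: min_def max_def)

lemma adj_succ: "3 \<le> j \<Longrightarrow> j + 1 \<le> k + 3 \<Longrightarrow> subdiv_claw_edge k j (j + 1)"
  unfolding subdiv_claw_edge_def by (auto simp: min_def max_def)

lemma adj_ge3: "3 \<le> j \<Longrightarrow> subdiv_claw_edge k j u \<Longrightarrow> u \<noteq> 1 \<and> u \<noteq> 2"
  unfolding subdiv_claw_edge_def by (auto simp: min_def max_def split: if_splits)

lemma adj_ge4: "4 \<le> j \<Longrightarrow> subdiv_claw_edge k j u \<Longrightarrow> u \<noteq> 0 \<and> u \<noteq> 1 \<and> u \<noteq> 2"
  unfolding subdiv_claw_edge_def by (auto simp: min_def max_def split: if_splits)

lemma nb0: "{u\<in>{0..k+3}. subdiv_claw_edge k 0 u} = {1,2,3}"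
  by (auto simp: adj_0)
lemma nb1: "{u\<in>{0..k+3}. subdiv_claw_edge k 1 u} = {0}"
  unfolding subdiv_claw_edge_def by (auto simp: min_def max_def)
lemma nb2: "{u\<in>{0..k+3}. subdiv_claw_edge k 2 u} = {0}"
  by (auto simp: adj_2)
lemma nb3: "{u\<in>{0..k+3}. subdiv_claw_edge k 3 u} \<subseteq> {0,4}"
  by (auto simp: adj_3)

lemma deg0: "degree {0..k+3} (subdiv_claw_edge k) 0 = 3"
  unfolding degree_def nb0 by simp
lemma deg1: "degree {0..k+3} (subdiv_claw_edge k) 1 = 1"
  unfolding degree_def nb1 by simp
lemma deg2: "degree {0..k+3} (subdiv_claw_edge k) 2 = 1"
  unfolding degree_def nb2 by simp
lemma deg3: "degree {0..k+3} (subdiv_claw_edge k) 3 \<le> 2"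
proof -
  have "card {u\<in>{0..k+3}. subdiv_claw_edge k 3 u} \<le> card {0::nat,4}"
    by (rule card_mono[OF _ nb3]) simp
  then show ?thesis unfolding degree_def by simp
qed

lemma conn:
  assumes S: "S \<subseteq> {0..k+3}" "S \<noteq> {}" "S \<noteq> {0..k+3}"
  shows "\<exists>v\<in>S. \<exists>w\<in>{0..k+3} - S. subdiv_claw_edge k v w"
proof (rule ccontr)
  assume "\<not> ?thesis"
  then have cl: "\<And>v w. v \<in> S \<Longrightarrow> w \<in> {0..k+3} \<Longrightarrow> subdiv_claw_edge k v w \<Longrightarrow> w \<in> S" by blast
  have down: "3 + d \<in> S \<Longrightarrow> 3 \<in> S" for d
  proof (induction d)
    case 0 then show ?case by simp
  next
    case (Suc d)
    have le: "4 + d \<le> k + 3" using Suc.prems S(1) by auto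
    have "subdiv_claw_edge k (4 + d) (3 + d)" using adj_pred[of "4+d" k] le by simp
    then have "3 + d \<in> S" using cl[of "3 + Suc d" "3 + d"] Suc.prems le by simp
    then show ?case using Suc.IH by simp
  qed
  obtain v where v: "v \<in> S" using S(2) by blast
  have "0 \<in> S"
  proof -
    consider "v = 0" | "v = 1" | "v = 2" | "v \<ge> 3" by linarith
    then show ?thesis
    proof cases
      case 1 then show ?thesis using v by simp
    next
      case 2 then show ?thesis using v cl[of 1 0] adj_1 by simp
    next
      case 3 then show ?thesis using v cl[of 2 0] adj_2 by simp
    next
      case 4
      then have "3 \<in> S" using down[of "v - 3"] v by simp
      then show ?thesis using cl[of 3 0] adj_3 by simp
    qed
  qed
  then have s123: "1 \<in> S" "2 \<in> S" "3 \<in> S" using cl[of 0] adj_0 by auto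
  have up: "3 + d \<le> k + 3 \<Longrightarrow> 3 + d \<in> S" for d
  proof (induction d)
    case 0 then show ?case using s123 by simp
  next
    case (Suc d)
    have "3 + d \<in> S" using Suc by simp
    moreover have "subdiv_claw_edge k (3 + d) (3 + d + 1)" using adj_succ[of "3+d" k] Suc.prems by simp
    ultimately show ?case using cl[of "3+d" "3 + Suc d"] Suc.prems by simp
  qed
  have "{0..k+3} \<subseteq> S"
  proof
    fix w assume w: "w \<in> {0..k+3}"
    consider "w = 0" | "w = 1" | "w = 2" | "w \<ge> 3" by linarith
    then show "w \<in> S"
    proof cases
      case 4 then show ?thesis using up[of "w - 3"] w by simp
    qed (use \<open>0 \<in> S\<close> s123 in auto)
  qed
  then show False using S by auto
qed


lemma deg_minus:
  assumes "finite V" "S \<subseteq> V" "w \<in> V - S" "E v w"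
  shows "card {u\<in>S. E v u} + 1 \<le> card {u\<in>V. E v u}"
proof -
  have "{u\<in>S. E v u} \<subset> {u\<in>V. E v u}" using assms by auto
  then have "card {u\<in>S. E v u} < card {u\<in>V. E v u}"
    by (rule psubset_card_mono[rotated]) (use assms in auto)
  then show ?thesis by simp
qed

locale claw =
  fixes k :: nat and L :: "nat \<Rightarrow> 'c set"
  assumes fin: "\<forall>v\<in>{0..k+3}. finite (L v)"
    and lists: "\<forall>v\<in>{0..k+3}. card (L v) \<ge> degree {0..k+3} (subdiv_claw_edge k) v + 1"
begin

abbreviation "VV \<equiv> {0..k+3}"
abbreviation "adj \<equiv> subdiv_claw_edge k"
abbreviation "col \<phi> \<equiv> L_colouring VV adj L \<phi>"
abbreviation "rs \<equiv> (recol_step VV adj L)\<^sup>*\<^sup>*"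
abbreviation "fz \<phi> v \<equiv> frozen_at VV adj L \<phi> v"

lemma sym_adj: "\<forall>u\<in>S. \<forall>w\<in>S. adj u w \<longrightarrow> adj w u"
  using adj_sym by blast

lemma finV: "finite VV" by simp

lemma cardL: "v \<in> VV \<Longrightarrow> card (L v) \<ge> card {u\<in>VV. adj v u} + 1"
  using lists unfolding degree_def by auto

lemma macro:
  assumes col: "col \<phi>" and p: "\<phi> 0 = p" and q: "q \<in> L 0" "q \<noteq> p" "q \<noteq> \<phi> 3"
    and l1: "L 1 - {p,q} \<noteq> {}" and l2: "L 2 - {p,q} \<noteq> {}"
  shows "\<exists>\<psi>. rs \<phi> \<psi> \<and> col \<psi> \<and> \<psi> 0 = q \<and> (\<forall>v. v \<noteq> 0 \<and> v \<noteq> 1 \<and> v \<noteq> 2 \<longrightarrow> \<psi> v = \<phi> v)"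
proof -
  obtain c1 where c1: "c1 \<in> L 1" "c1 \<noteq> p" "c1 \<noteq> q" using l1 by blast
  obtain c2 where c2: "c2 \<in> L 2" "c2 \<noteq> p" "c2 \<noteq> q" using l2 by blast
  have V: "(0::nat) \<in> VV" "(1::nat) \<in> VV" "(2::nat) \<in> VV" "(3::nat) \<in> VV" by auto
  define \<phi>1 where "\<phi>1 = \<phi>(1 := c1)"
  have f1: "\<forall>u\<in>VV. adj 1 u \<longrightarrow> \<phi> u \<noteq> c1"
  proof (intro ballI impI)
    fix u assume "adj 1 u" then have "u = 0" by (simp only: adj_1)
    then show "\<phi> u \<noteq> c1" using p c1 by simp
  qed
  note r1 = recolour[OF col V(2) c1(1) f1 sym_adj]
  have col1: "col \<phi>1" using r1(1) \<phi>1_def by simp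
  define \<phi>2 where "\<phi>2 = \<phi>1(2 := c2)"
  have f2: "\<forall>u\<in>VV. adj 2 u \<longrightarrow> \<phi>1 u \<noteq> c2"
  proof (intro ballI impI)
    fix u assume "adj 2 u" then have "u = 0" by (simp only: adj_2)
    then show "\<phi>1 u \<noteq> c2" using p c2 \<phi>1_def by simp
  qed
  note r2 = recolour[OF col1 V(3) c2(1) f2 sym_adj]
  have col2: "col \<phi>2" using r2(1) \<phi>2_def by simp
  have f3: "\<forall>u\<in>VV. adj 0 u \<longrightarrow> \<phi>2 u \<noteq> q"
  proof (intro ballI impI)
    fix u assume "adj 0 u" then have "u = 1 \<or> u = 2 \<or> u = 3" by (simp only: adj_0) simp
    then show "\<phi>2 u \<noteq> q" using q c1 c2 \<phi>1_def \<phi>2_def by auto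
  qed
  note r3 = recolour[OF col2 V(1) q(1) f3 sym_adj]
  show ?thesis
  proof (intro exI conjI)
    show "rs \<phi> (\<phi>2(0 := q))" using r1(2) r2(2) r3(2) \<phi>1_def \<phi>2_def
      by (meson converse_rtranclp_into_rtranclp r_into_rtranclp)
    show "col (\<phi>2(0 := q))" using r3(1) .
    show "(\<phi>2(0 := q)) 0 = q" by simp
    show "\<forall>v. v \<noteq> 0 \<and> v \<noteq> 1 \<and> v \<noteq> 2 \<longrightarrow> (\<phi>2(0 := q)) v = \<phi> v" using \<phi>1_def \<phi>2_def by simp
  qed
qed

lemma prop3:
  "3 + d \<le> k + 3 \<Longrightarrow> col \<phi> \<Longrightarrow> \<not> fz \<phi> (3+d) \<Longrightarrow>
   \<exists>\<psi>. rs \<phi> \<psi> \<and> col \<psi> \<and> \<psi> 3 \<noteq> \<phi> 3 \<and> \<psi> 0 = \<phi> 0 \<and> \<psi> 1 = \<phi> 1 \<and> \<psi> 2 = \<phi> 2"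
proof (induction d arbitrary: \<phi>)
  case 0
  from 0 obtain c where c: "c \<in> L 3" "c \<noteq> \<phi> 3" "\<forall>u\<in>VV. adj 3 u \<longrightarrow> \<phi> u \<noteq> c"
    unfolding frozen_at_def by auto
  have "(3::nat) \<in> VV" by simp
  note r = recolour[OF 0(2) this c(1) c(3) sym_adj]
  show ?case
  proof (intro exI conjI)
    show "rs \<phi> (\<phi>(3 := c))" by (meson r(2) r_into_rtranclp)
    show "col (\<phi>(3 := c))" using r(1) .
  qed (use c in auto)
next
  case (Suc d)
  define j where "j = 3 + Suc d"
  have jV: "j \<in> VV" using Suc.prems j_def by simp
  show ?case
  proof (cases "fz \<phi> (3+d)")
    case False then show ?thesis using Suc.IH[of \<phi>] Suc.prems by auto
  next
    case True
    from Suc.prems(3) obtain c where c: "c \<in> L j" "c \<noteq> \<phi> j" "\<forall>u\<in>VV. adj j u \<longrightarrow> \<phi> u \<noteq> c"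
      unfolding frozen_at_def j_def by auto
    note r = recolour[OF Suc.prems(2) jV c(1) c(3) sym_adj]
    define \<phi>' where "\<phi>' = \<phi>(j := c)"
    have xV: "3 + d \<in> VV" using Suc.prems by simp
    have adjxj: "adj (3+d) j" using adj_succ[of "3+d" k] Suc.prems j_def by simp
    have "\<not> fz \<phi>' (3+d)"
      by (rule unfreeze[OF True xV finV _ cardL[OF xV] Suc.prems(2) jV adjxj])
         (use fin xV \<phi>'_def j_def c in auto)
    moreover have "3 + d \<le> k + 3" using Suc.prems by simp
    moreover have "col \<phi>'" using r(1) \<phi>'_def by simp
    ultimately obtain \<psi> where \<psi>: "rs \<phi>' \<psi>" "col \<psi>" "\<psi> 3 \<noteq> \<phi>' 3" "\<psi> 0 = \<phi>' 0" "\<psi> 1 = \<phi>' 1" "\<psi> 2 = \<phi>' 2"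
      using Suc.IH by blast
    have "rs \<phi> \<psi>" using r(2) \<psi>(1) \<phi>'_def by (meson converse_rtranclp_into_rtranclp)
    then show ?thesis using \<psi> \<phi>'_def j_def by auto
  qed
qed

definition blk :: "'c \<Rightarrow> 'c \<Rightarrow> bool" where
  "blk p q \<longleftrightarrow> L 1 = {p,q} \<or> L 2 = {p,q}"

lemma nblk1:
  assumes "card A = 2" "p \<noteq> q" "A \<noteq> {p,q}"
  shows "A - {p,q} \<noteq> {}"
proof
  assume "A - {p,q} = {}"
  then have "A \<subseteq> {p,q}" by auto
  moreover have "card A = card {p,q}" using assms by simp
  ultimately have "A = {p,q}" using card_subset_eq[of "{p,q}" A] by simp
  then show False using assms by simp
qed

lemma nblk:
  assumes "card (L 1) = 2" "card (L 2) = 2" "p \<noteq> q" "\<not> blk p q"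
  shows "L 1 - {p,q} \<noteq> {}" "L 2 - {p,q} \<noteq> {}"
proof -
  have "L 1 \<noteq> {p,q}" "L 2 \<noteq> {p,q}" using assms(4) unfolding blk_def by auto
  then show "L 1 - {p,q} \<noteq> {}" "L 2 - {p,q} \<noteq> {}"
    using nblk1[OF assms(1) assms(3)] nblk1[OF assms(2) assms(3)] by auto
qed

lemma route1:
  assumes cards: "card (L 1) = 2" "card (L 2) = 2" and x: "x \<in> L 0" "x \<notin> L 3"
    and col: "col \<phi>" and p: "\<phi> 0 = p" "p \<noteq> x" and b: "\<not> blk p x"
  shows "\<exists>\<psi>. rs \<phi> \<psi> \<and> col \<psi> \<and> \<psi> 0 = x"
proof -
  have "\<phi> 3 \<in> L 3" using col unfolding L_colouring_def by auto
  then have "x \<noteq> \<phi> 3" using x by auto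
  then show ?thesis using macro[OF col p(1) x(1) _ _ nblk[OF cards _ b]] p(2) by blast
qed

lemma route2:
  assumes cards: "card (L 1) = 2" "card (L 2) = 2" and x: "x \<in> L 0" "x \<notin> L 3"
    and col: "col \<phi>" and p: "\<phi> 0 = p" and w: "w \<in> L 0" "w \<noteq> p" "w \<noteq> x" "w \<noteq> \<phi> 3"
    and b: "\<not> blk p w" "\<not> blk w x"
  shows "\<exists>\<psi>. rs \<phi> \<psi> \<and> col \<psi> \<and> \<psi> 0 = x"
proof -
  obtain \<psi>1 where \<psi>1: "rs \<phi> \<psi>1" "col \<psi>1" "\<psi>1 0 = w"
    using macro[OF col p(1) w(1) w(2) w(4) nblk[OF cards _ b(1)]] w(2) by metis
  obtain \<psi> where \<psi>: "rs \<psi>1 \<psi>" "col \<psi>" "\<psi> 0 = x"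
    using route1[OF cards x \<psi>1(2) \<psi>1(3) w(3) b(2)] by blast
  have "rs \<phi> \<psi>" using \<psi>1(1) \<psi>(1) by (rule rtranclp_trans)
  with \<psi> show ?thesis by blast
qed

lemma leaf_fz:
  assumes i: "i = 1 \<or> i = 2" and Li: "L i = {y,z}" and yz: "y \<noteq> z" and col: "col \<alpha>" and a0: "\<alpha> 0 = y"
  shows "\<alpha> i = z \<and> fz \<alpha> i"
proof -
  have iV: "i \<in> VV" using i by auto
  have ai: "\<alpha> i \<in> L i" using col iV unfolding L_colouring_def by auto
  have "adj 0 i" using i adj_0 by auto
  then have "\<alpha> 0 \<noteq> \<alpha> i" using col iV unfolding L_colouring_def by auto
  then have az: "\<alpha> i = z" using ai Li a0 by auto
  have "adj i 0" using i adj_1 adj_2 by auto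
  then have "fz \<alpha> i" unfolding frozen_at_def using az Li a0 yz by auto
  then show ?thesis using az by simp
qed

end


context claw
begin

lemma core:
  assumes cards: "card (L 1) = 2" "card (L 2) = 2"
    and x: "x \<in> L 0" "x \<notin> L 3"
    and col: "col \<alpha>" and unf: "unfrozen VV adj L \<alpha>"
    and L0: "L 0 = {\<alpha> 0, x, w, w'}"
    and dist: "\<alpha> 0 \<noteq> x" "\<alpha> 0 \<noteq> w" "\<alpha> 0 \<noteq> w'" "x \<noteq> w" "x \<noteq> w'" "w \<noteq> w'"
    and h: "\<alpha> 3 = w" and b1: "\<not> blk (\<alpha> 0) w" "\<not> blk w x" and bx: "blk (\<alpha> 0) x"
    and b2: "blk (\<alpha> 0) w' \<or> blk w' x"
  shows "\<exists>\<alpha>'. rs \<alpha> \<alpha>' \<and> col \<alpha>' \<and> \<alpha>' 0 = x"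
proof (cases "\<exists>j. 3 \<le> j \<and> j \<le> k+3 \<and> \<not> fz \<alpha> j")
  case True
  then obtain j where j: "3 \<le> j" "j \<le> k+3" "\<not> fz \<alpha> j" by blast
  have "3 + (j - 3) \<le> k + 3" "\<not> fz \<alpha> (3 + (j - 3))" using j by auto
  then obtain \<alpha>1 where a1: "rs \<alpha> \<alpha>1" "col \<alpha>1" "\<alpha>1 3 \<noteq> \<alpha> 3" "\<alpha>1 0 = \<alpha> 0"
    using prop3[OF _ col] by blast
  obtain \<alpha>2 where a2: "rs \<alpha>1 \<alpha>2" "col \<alpha>2" "\<alpha>2 0 = x"
    using route2[OF cards x a1(2) a1(4), of w] x L0 dist h a1(3) b1 by auto
  have "rs \<alpha> \<alpha>2" using a1(1) a2(1) by (rule rtranclp_trans)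
  then show ?thesis using a2 by blast
next
  case False
  then have allfz: "\<And>j. 3 \<le> j \<Longrightarrow> j \<le> k+3 \<Longrightarrow> fz \<alpha> j" by blast
  show ?thesis
  proof (cases "blk (\<alpha> 0) w'")
    case True
    have ne: "{\<alpha> 0, x} \<noteq> {\<alpha> 0, w'}" using dist by (simp add: doubleton_eq_iff)
    have cases: "(L 1 = {\<alpha> 0, x} \<and> L 2 = {\<alpha> 0, w'}) \<or> (L 1 = {\<alpha> 0, w'} \<and> L 2 = {\<alpha> 0, x})"
      using True bx ne unfolding blk_def by metis
    obtain a b where ab: "a = 1 \<or> a = 2" "b = 1 \<or> b = 2" "L a = {\<alpha> 0, x}" "L b = {\<alpha> 0, w'}" "a \<noteq> b"
    proof -
      have n12: "(1::nat) \<noteq> 2" by simp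
      from cases show ?thesis
      proof
        assume "L 1 = {\<alpha> 0, x} \<and> L 2 = {\<alpha> 0, w'}"
        then show ?thesis using that[of 1 2] by auto
      next
        assume "L 1 = {\<alpha> 0, w'} \<and> L 2 = {\<alpha> 0, x}"
        then show ?thesis using that[of 2 1] by auto
      qed
    qed
    note la = leaf_fz[OF ab(1) ab(3) dist(1) col refl]
    note lb = leaf_fz[OF ab(2) ab(4) dist(3) col refl]
    have "\<forall>v\<in>VV. fz \<alpha> v"
    proof
      fix v assume v: "v \<in> VV"
      consider "v = 0" | "v = 1" | "v = 2" | "v \<ge> 3" by linarith
      then show "fz \<alpha> v"
      proof cases
        case 1
        have "\<forall>c\<in>L 0 - {\<alpha> 0}. \<exists>u\<in>VV. adj 0 u \<and> \<alpha> u = c"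
        proof
          fix c assume c: "c \<in> L 0 - {\<alpha> 0}"
          then have "c = x \<or> c = w \<or> c = w'" using L0 by auto
          moreover have "adj 0 a" "adj 0 b" "adj 0 3" using ab(1,2) adj_0 by auto
          moreover have "a \<in> VV" "b \<in> VV" "(3::nat) \<in> VV" using ab(1,2) by auto
          ultimately show "\<exists>u\<in>VV. adj 0 u \<and> \<alpha> u = c" using la lb h by metis
        qed
        then show ?thesis using 1 unfolding frozen_at_def by simp
      next
        case 2
        then show ?thesis using la lb ab(1,2,5) by auto
      next
        case 3
        then show ?thesis using la lb ab(1,2,5) by auto
      next
        case 4
        then show ?thesis using allfz v by auto
      qed
    qed
    then show ?thesis using unf unfolding unfrozen_def by blast
  next
    case False
    with b2 have bw'x: "blk w' x" by simp
    have h3: "w' \<noteq> \<alpha> 3" using h dist by simp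
    obtain \<alpha>1 where a1: "rs \<alpha> \<alpha>1" "col \<alpha>1" "\<alpha>1 0 = w'" "\<forall>v. v \<noteq> 0 \<and> v \<noteq> 1 \<and> v \<noteq> 2 \<longrightarrow> \<alpha>1 v = \<alpha> v"
      using macro[OF col refl _ _ h3 nblk[OF cards _ False]] L0 dist by auto
    have V3: "(3::nat) \<in> VV" "(0::nat) \<in> VV" by auto
    have adj30: "adj 3 0" using adj_3 by simp
    have "\<not> fz \<alpha>1 3"
    proof (rule unfreeze[OF allfz[of 3] V3(1) finV _ cardL[OF V3(1)] col V3(2) adj30])
      show "finite (L 3)" using fin by simp
      show "\<alpha>1 3 = \<alpha> 3" using a1(4) by simp
      show "\<alpha>1 0 \<noteq> \<alpha> 0" using a1(3) dist by simp
      show "\<forall>u\<in>VV. adj 3 u \<longrightarrow> u \<noteq> 0 \<longrightarrow> \<alpha>1 u = \<alpha> u" using a1(4) adj_3 by auto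
    qed auto
    then obtain \<alpha>2 where a2: "rs \<alpha>1 \<alpha>2" "col \<alpha>2" "\<alpha>2 3 \<noteq> \<alpha>1 3" "\<alpha>2 0 = \<alpha>1 0"
      using prop3[of 0 \<alpha>1] a1(2) by auto
    have ne1: "{\<alpha> 0, x} \<noteq> {w', w}" "{w', x} \<noteq> {w', w}" "{\<alpha> 0, x} \<noteq> {w', x}"
      using dist by (auto simp: doubleton_eq_iff)
    have nb: "\<not> blk w' w"
      using bx bw'x ne1 unfolding blk_def by metis
    have "\<alpha>2 3 \<noteq> w" using a2(3) a1(4) h by simp
    then obtain \<alpha>3 where a3: "rs \<alpha>2 \<alpha>3" "col \<alpha>3" "\<alpha>3 0 = x"
      using route2[OF cards x a2(2) a2(4), of w] a1(3) L0 dist nb b1 by auto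
    have "rs \<alpha> \<alpha>3" using a1(1) a2(1) a3(1) by (meson rtranclp_trans)
    then show ?thesis using a3 by blast
  qed
qed

end


context claw
begin

lemma lemA:
  assumes cards: "card (L 0) = 4" "card (L 1) = 2" "card (L 2) = 2" and x: "x \<in> L 0" "x \<notin> L 3"
    and col: "col \<alpha>" and unf: "unfrozen VV adj L \<alpha>" and ne: "\<alpha> 0 \<noteq> x"
  shows "\<exists>\<alpha>'. rs \<alpha> \<alpha>' \<and> col \<alpha>' \<and> \<alpha>' 0 = x"
proof -
  define y where "y = \<alpha> 0"
  define h where "h = \<alpha> 3"
  have V: "(0::nat) \<in> VV" "(3::nat) \<in> VV" by auto
  have y0: "y \<in> L 0" using col V unfolding L_colouring_def y_def by auto
  have h3: "h \<in> L 3" using col V unfolding L_colouring_def h_def by auto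
  have hx: "h \<noteq> x" using h3 x by auto
  have "adj 0 3" using adj_0 by simp
  then have "\<alpha> 0 \<noteq> \<alpha> 3" using col V unfolding L_colouring_def by blast
  then have hy: "h \<noteq> y" using y_def h_def by simp
  have yx: "y \<noteq> x" using ne y_def by simp
  have finL0: "finite (L 0)" using fin by simp
  have "card (L 0 - {y, x}) = 2"
    using card_Diff_subset[of "{y,x}" "L 0"] y0 x yx cards(1) finL0 by auto
  then obtain u u' where uu: "L 0 - {y, x} = {u, u'}" "u \<noteq> u'" by (meson card_2_iff)
  have L0: "L 0 = {y, x, u, u'}" using uu y0 x by auto
  have du: "u \<noteq> y" "u \<noteq> x" "u' \<noteq> y" "u' \<noteq> x" "u \<in> L 0" "u' \<in> L 0" using uu by auto
  show ?thesis
  proof (cases "blk y x")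
    case False
    then show ?thesis using route1[OF cards(2,3) x col y_def[symmetric] yx] by blast
  next
    case bx: True
    show ?thesis
    proof (cases "u \<noteq> h \<and> \<not> blk y u \<and> \<not> blk u x")
      case True
      then show ?thesis using route2[OF cards(2,3) x col y_def[symmetric] du(5), of] du h_def by auto
    next
      case nu: False
      show ?thesis
      proof (cases "u' \<noteq> h \<and> \<not> blk y u' \<and> \<not> blk u' x")
        case True
        then show ?thesis using route2[OF cards(2,3) x col y_def[symmetric] du(6)] du h_def by auto
      next
        case nu': False
        have ne3: "{y,x} \<noteq> {y,u}" "{y,x} \<noteq> {u,x}" "{y,x} \<noteq> {y,u'}" "{y,x} \<noteq> {u',x}"
          "{y,u} \<noteq> {y,u'}" "{y,u} \<noteq> {u',x}" "{u,x} \<noteq> {y,u'}" "{u,x} \<noteq> {u',x}"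
          using du uu(2) yx by (auto simp: doubleton_eq_iff)
        show ?thesis
        proof (cases "u = h")
          case True
          then have "u' \<noteq> h" using uu by auto
          with nu' have b': "blk y u' \<or> blk u' x" by auto
          have nbu: "\<not> blk y u" "\<not> blk u x" using b' bx ne3 unfolding blk_def by metis+
          show ?thesis
            by (rule core[OF cards(2,3) x col unf])
               (use L0 y_def du uu(2) True h_def nbu bx b' yx in auto)
        next
          case False
          with nu have bu: "blk y u \<or> blk u x" by auto
          have "u' = h"
          proof (rule ccontr)
            assume "u' \<noteq> h"
            with nu' have b': "blk y u' \<or> blk u' x" by auto
            show False using b' bu bx ne3 unfolding blk_def by metis
          qed
          have nbu: "\<not> blk y u'" "\<not> blk u' x" using bu bx ne3 unfolding blk_def by metis+
          have L0': "L 0 = {y, x, u', u}" using L0 by auto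
          show ?thesis
            by (rule core[OF cards(2,3) x col unf, of u' u])
               (use L0' y_def du uu(2) \<open>u' = h\<close> h_def nbu bx bu yx in auto)
        qed
      qed
    qed
  qed
qed

lemma Kx:
  assumes x: "x \<in> L 0" "x \<notin> L 3" and a: "col \<alpha>" "\<alpha> 0 = x" and b: "col \<beta>" "\<beta> 0 = x"
  shows "rs \<alpha> \<beta>"
proof -
  define L' where "L' v = (if adj 0 v then L v - {x} else L v)" for v
  let ?S = "VV - {0}"
  have colS: "L_colouring ?S adj L' \<gamma>" if g: "col \<gamma>" "\<gamma> 0 = x" for \<gamma>
    unfolding L_colouring_def
  proof (intro conjI ballI impI)
    fix v assume v: "v \<in> ?S"
    have "\<gamma> v \<in> L v" using g v unfolding L_colouring_def by auto
    moreover have "adj 0 v \<Longrightarrow> \<gamma> v \<noteq> x" using g v unfolding L_colouring_def by force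
    ultimately show "\<gamma> v \<in> L' v" unfolding L'_def by auto
  next
    fix u v assume "u \<in> ?S" "v \<in> ?S" "adj u v"
    then show "\<gamma> u \<noteq> \<gamma> v" using g unfolding L_colouring_def by auto
  qed
  have deg: "\<forall>S\<subseteq>?S. S \<noteq> {} \<longrightarrow> (\<exists>v\<in>S. card (L' v) \<ge> card {u\<in>S. adj v u} + 2 \<or> {u\<in>S. adj v u} = {})"
  proof (intro allI impI)
    fix S assume S: "S \<subseteq> ?S" "S \<noteq> {}"
    show "\<exists>v\<in>S. card (L' v) \<ge> card {u\<in>S. adj v u} + 2 \<or> {u\<in>S. adj v u} = {}"
    proof (cases "1 \<in> S")
      case True
      have "{u\<in>S. adj 1 u} = {}" using S(1) by (auto simp only: adj_1)
      then show ?thesis using True by blast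
    next
      case n1: False
      show ?thesis
      proof (cases "2 \<in> S")
        case True
        have "{u\<in>S. adj 2 u} = {}" using S(1) by (auto simp only: adj_2)
        then show ?thesis using True by blast
      next
        case n2: False
        define m where "m = Min S"
        have finS: "finite S" using S(1) finite_subset by blast
        have mS: "m \<in> S" using Min_in[OF finS S(2)] m_def by simp
        have "m \<noteq> 0" "m \<noteq> 1" "m \<noteq> 2" using mS n1 n2 S(1) by auto
        then have m3: "m \<ge> 3" by presburger
        have mV: "m \<in> VV" using mS S(1) by auto
        obtain w where w: "w \<in> VV - S" "adj m w"
        proof (cases "m = 3")
          case True
          then show ?thesis using that[of 0] S(1) adj_3 by auto
        next
          case False
          then have m4: "m \<ge> 4" using m3 by simp
          have "m - 1 \<notin> S"
          proof
            assume "m - 1 \<in> S"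
            then have "m \<le> m - 1" using Min_le[OF finS] m_def by blast
            then show False using m4 by simp
          qed
          moreover have "adj m (m - 1)" using adj_pred[OF m4] mV by simp
          ultimately show ?thesis using that[of "m - 1"] mV by auto
        qed
        have dm: "card {u\<in>S. adj m u} + 1 \<le> card {u\<in>VV. adj m u}"
        proof -
          have "S \<subseteq> VV" using S(1) by auto
          then show ?thesis using deg_minus[of VV S w adj m] w by simp
        qed
        have "L' m = L m"
        proof (cases "adj 0 m")
          case True
          then have "m = 3" using adj_0 m3 by auto
          then show ?thesis using True x(2) unfolding L'_def by auto
        next
          case False then show ?thesis unfolding L'_def by simp
        qed
        then have "card (L' m) \<ge> card {u\<in>S. adj m u} + 2" using cardL[OF mV] dm by simp
        then show ?thesis using mS by blast
      qed
    qed
  qed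
  have finS: "finite ?S" by simp
  have symS: "\<forall>u\<in>?S. \<forall>w\<in>?S. adj u w \<longrightarrow> adj w u" using sym_adj by blast
  have neS: "?S \<noteq> {}" by auto
  have rt: "(recol_step ?S adj L')\<^sup>*\<^sup>* \<alpha> \<beta>"
    using lemS[OF finS symS deg neS colS[OF a] colS[OF b]] .
  have "rs (\<alpha>(0:=x)) (\<beta>(0:=x))"
  proof (rule fixv[OF rt])
    show "(0::nat) \<in> VV" by simp
    show "x \<in> L 0" using x by simp
    show "\<forall>v\<in>VV - {0}. L' v \<subseteq> L v" unfolding L'_def by auto
    show "\<forall>v\<in>VV - {0}. adj 0 v \<or> adj v 0 \<longrightarrow> x \<notin> L' v" unfolding L'_def using adj_sym by auto
    show "\<not> adj 0 0" using adj_0 by simp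
  qed
  then show ?thesis using a(2) b(2) by (metis fun_upd_triv)
qed

end


context claw
begin

theorem nat_main:
  assumes a: "col \<alpha>" "unfrozen VV adj L \<alpha>" and b: "col \<beta>" "unfrozen VV adj L \<beta>"
  shows "rs \<alpha> \<beta>"
proof (cases "\<exists>s\<in>VV. card (L s) \<ge> degree VV adj s + 2")
  case True
  then obtain s where s: "s \<in> VV" "card (L s) \<ge> card {u\<in>VV. adj s u} + 2"
    unfolding degree_def by auto
  have deg: "\<forall>S\<subseteq>VV. S \<noteq> {} \<longrightarrow> (\<exists>v\<in>S. card (L v) \<ge> card {u\<in>S. adj v u} + 2 \<or> {u\<in>S. adj v u} = {})"
  proof (intro allI impI)
    fix S assume S: "S \<subseteq> VV" "S \<noteq> {}"
    show "\<exists>v\<in>S. card (L v) \<ge> card {u\<in>S. adj v u} + 2 \<or> {u\<in>S. adj v u} = {}"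
    proof (cases "s \<in> S")
      case True
      have "card {u\<in>S. adj s u} \<le> card {u\<in>VV. adj s u}" by (rule card_mono) (use S(1) in auto)
      then show ?thesis using True s by force
    next
      case False
      then have "S \<noteq> VV" using s by auto
      then obtain v w where vw: "v \<in> S" "w \<in> VV - S" "adj v w" using conn[OF S] by blast
      then have "card {u\<in>S. adj v u} + 1 \<le> card {u\<in>VV. adj v u}"
        using deg_minus[of VV S w adj v] S(1) by simp
      moreover have "card (L v) \<ge> card {u\<in>VV. adj v u} + 1" using cardL vw(1) S(1) by auto
      ultimately show ?thesis using vw(1) by force
    qed
  qed
  show ?thesis using lemS[OF finV sym_adj deg _ a(1) b(1)] by auto
next
  case False
  then have tight: "\<And>v. v \<in> VV \<Longrightarrow> card (L v) = degree VV adj v + 1" using lists by force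
  have c0: "card (L 0) = 4" using tight[of 0] deg0[of k] by simp
  have c1: "card (L 1) = 2" using tight[of 1] deg1[of k] by simp
  have c2: "card (L 2) = 2" using tight[of 2] deg2[of k] by simp
  have c3: "card (L 3) \<le> 3" using tight[of 3] deg3[of k] by simp
  have "\<not> L 0 \<subseteq> L 3"
  proof
    assume "L 0 \<subseteq> L 3"
    then have "card (L 0) \<le> card (L 3)" using fin by (intro card_mono) auto
    then show False using c0 c3 by simp
  qed
  then obtain x where x: "x \<in> L 0" "x \<notin> L 3" by blast
  have reach: "\<exists>\<gamma>'. rs \<gamma> \<gamma>' \<and> col \<gamma>' \<and> \<gamma>' 0 = x" if g: "col \<gamma>" "unfrozen VV adj L \<gamma>" for \<gamma>
  proof (cases "\<gamma> 0 = x")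
    case True then show ?thesis using g by blast
  next
    case False then show ?thesis using lemA[OF c0 c1 c2 x g False] by blast
  qed
  obtain \<alpha>' where a': "rs \<alpha> \<alpha>'" "col \<alpha>'" "\<alpha>' 0 = x" using reach[OF a] by blast
  obtain \<beta>' where b': "rs \<beta> \<beta>'" "col \<beta>'" "\<beta>' 0 = x" using reach[OF b] by blast
  have "rs \<alpha>' \<beta>'" using Kx[OF x a'(2,3) b'(2,3)] .
  moreover have "rs \<beta>' \<beta>" using rt_sym[OF b'(1)] .
  ultimately show ?thesis using a'(1) by (meson rtranclp_trans)
qed

end

lemma col_cong: "(\<forall>v\<in>V. \<phi> v = \<psi> v) \<Longrightarrow> L_colouring V E L \<phi> \<Longrightarrow> L_colouring V E L \<psi>"
  unfolding L_colouring_def by auto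

theorem mainTheorem15:
  fixes V :: "'a set" and E :: "'a \<Rightarrow> 'a \<Rightarrow> bool" and L :: "'a \<Rightarrow> 'c set"
    and k :: nat and f :: "nat \<Rightarrow> 'a" and \<alpha> \<beta> :: "'a \<Rightarrow> 'c"
  assumes bij: "bij_betw f {0..k+3} V"
    and iso: "\<forall>i\<in>{0..k+3}. \<forall>j\<in>{0..k+3}. E (f i) (f j) \<longleftrightarrow> subdiv_claw_edge k i j"
    and fin: "\<forall>v\<in>V. finite (L v)"
    and lists: "\<forall>v\<in>V. card (L v) \<ge> degree V E v + 1"
    and \<alpha>: "L_colouring V E L \<alpha>" "unfrozen V E L \<alpha>"
    and \<beta>: "L_colouring V E L \<beta>" "unfrozen V E L \<beta>"
  shows "reconf_equiv V E L \<alpha> \<beta>"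
proof -
  let ?A = "{0..k+3::nat}"
  let ?adj = "subdiv_claw_edge k"
  define g where "g = inv_into ?A f"
  have fA: "\<And>i. i \<in> ?A \<Longrightarrow> f i \<in> V" using bij bij_betwE by blast
  have gV: "\<And>v. v \<in> V \<Longrightarrow> g v \<in> ?A" using bij unfolding g_def by (metis bij_betw_def inv_into_into)
  have fg: "\<And>v. v \<in> V \<Longrightarrow> f (g v) = v" using bij unfolding g_def by (meson bij_betw_inv_into_right)
  have injf: "inj_on f ?A" using bij bij_betw_imp_inj_on by blast
  define Ln where "Ln i = L (f i)" for i
  have isoV: "\<And>u v. u \<in> V \<Longrightarrow> v \<in> V \<Longrightarrow> E u v \<longleftrightarrow> ?adj (g u) (g v)"
    using iso gV fg by metis
  have nbr: "{u\<in>V. E (f i) u} = f ` {j\<in>?A. ?adj i j}" if i: "i \<in> ?A" for i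
  proof
    show "{u\<in>V. E (f i) u} \<subseteq> f ` {j\<in>?A. ?adj i j}"
    proof
      fix u assume u: "u \<in> {u\<in>V. E (f i) u}"
      then have "?adj i (g u)" using iso i gV fg by (metis mem_Collect_eq)
      then show "u \<in> f ` {j\<in>?A. ?adj i j}" using u gV fg by (metis (mono_tags, lifting) image_eqI mem_Collect_eq)
    qed
    show "f ` {j\<in>?A. ?adj i j} \<subseteq> {u\<in>V. E (f i) u}" using iso i fA by auto
  qed
  have degeq: "degree V E (f i) = degree ?A ?adj i" if i: "i \<in> ?A" for i
  proof -
    have "inj_on f {j\<in>?A. ?adj i j}" using injf by (rule inj_on_subset) auto
    then show ?thesis unfolding degree_def nbr[OF i] by (simp add: card_image)
  qed
  interpret claw k Ln
  proof
    show "\<forall>v\<in>?A. finite (Ln v)" using fin fA unfolding Ln_def by auto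
    show "\<forall>v\<in>?A. degree ?A ?adj v + 1 \<le> card (Ln v)"
    proof
      fix v assume v: "v \<in> ?A"
      have "degree V E (f v) + 1 \<le> card (L (f v))" using lists fA[OF v] by blast
      then show "degree ?A ?adj v + 1 \<le> card (Ln v)" using degeq[OF v] unfolding Ln_def by simp
    qed
  qed
  have colT: "L_colouring ?A ?adj Ln (\<lambda>i. \<phi> (f i))" if c: "L_colouring V E L \<phi>" for \<phi>
    using c fA iso unfolding L_colouring_def Ln_def by auto
  have unfT: "unfrozen ?A ?adj Ln (\<lambda>i. \<phi> (f i))" if u: "unfrozen V E L \<phi>" for \<phi>
  proof -
    from u obtain v where v: "v \<in> V" "\<not> frozen_at V E L \<phi> v" unfolding unfrozen_def by blast
    have "\<not> frozen_at ?A ?adj Ln (\<lambda>i. \<phi> (f i)) (g v)"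
    proof
      assume fz: "frozen_at ?A ?adj Ln (\<lambda>i. \<phi> (f i)) (g v)"
      have "frozen_at V E L \<phi> v"
        unfolding frozen_at_def
      proof
        fix c assume c: "c \<in> L v - {\<phi> v}"
        have "\<forall>c\<in>L v - {\<phi> v}. \<exists>u\<in>?A. ?adj (g v) u \<and> \<phi> (f u) = c"
          using fz fg[OF v(1)] unfolding frozen_at_def Ln_def by simp
        then obtain j where j: "j \<in> ?A" "?adj (g v) j" "\<phi> (f j) = c"
          using c by blast
        have "E v (f j)" using iso j gV[OF v(1)] fg[OF v(1)] by metis
        then show "\<exists>u\<in>V. E v u \<and> \<phi> u = c" using j fA by blast
      qed
      then show False using v by simp
    qed
    then show ?thesis unfolding unfrozen_def using gV[OF v(1)] by blast
  qed
  have mapstep: "recol_step V E L (\<lambda>v. \<phi> (g v)) (\<lambda>v. \<psi> (g v))"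
    if st: "recol_step ?A ?adj Ln \<phi> \<psi>" for \<phi> \<psi>
  proof -
    have colB: "L_colouring V E L (\<lambda>v. \<chi> (g v))" if c: "L_colouring ?A ?adj Ln \<chi>" for \<chi>
      unfolding L_colouring_def
    proof (intro conjI ballI impI)
      fix v assume v: "v \<in> V"
      then show "\<chi> (g v) \<in> L v" using c gV fg unfolding L_colouring_def Ln_def by metis
    next
      fix u v assume uv: "u \<in> V" "v \<in> V" "E u v"
      then show "\<chi> (g u) \<noteq> \<chi> (g v)" using c gV isoV unfolding L_colouring_def by metis
    qed
    from st obtain i where i: "i \<in> ?A" "\<forall>j\<in>?A. j \<noteq> i \<longrightarrow> \<phi> j = \<psi> j"
      and c1: "L_colouring ?A ?adj Ln \<phi>" and c2: "L_colouring ?A ?adj Ln \<psi>"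
      unfolding recol_step_def by blast
    have "\<forall>u\<in>V. u \<noteq> f i \<longrightarrow> \<phi> (g u) = \<psi> (g u)" using i gV fg by metis
    then show ?thesis unfolding recol_step_def using colB[OF c1] colB[OF c2] fA[OF i(1)] by blast
  qed
  have maprt: "(recol_step V E L)\<^sup>*\<^sup>* (\<lambda>v. \<phi> (g v)) (\<lambda>v. \<psi> (g v))"
    if rt: "(recol_step ?A ?adj Ln)\<^sup>*\<^sup>* \<phi> \<psi>" for \<phi> \<psi>
    using rt
  proof (induction rule: rtranclp_induct)
    case base then show ?case by simp
  next
    case (step y z) then show ?case using mapstep by (meson rtranclp.rtrancl_into_rtrancl)
  qed
  have main: "(recol_step ?A ?adj Ln)\<^sup>*\<^sup>* (\<lambda>i. \<alpha> (f i)) (\<lambda>i. \<beta> (f i))"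
    using nat_main[OF colT[OF \<alpha>(1)] unfT[OF \<alpha>(2)] colT[OF \<beta>(1)] unfT[OF \<beta>(2)]] .
  have m2: "(recol_step V E L)\<^sup>*\<^sup>* (\<lambda>v. \<alpha> (f (g v))) (\<lambda>v. \<beta> (f (g v)))"
    using maprt[OF main] .
  have f0: "f 0 \<in> V" using fA by simp
  have s1: "recol_step V E L \<alpha> (\<lambda>v. \<alpha> (f (g v)))"
    by (rule agree_step[OF \<alpha>(1) _ f0]) (use fg \<alpha>(1) col_cong[of V \<alpha> "\<lambda>v. \<alpha> (f (g v))"] in auto)
  have s2: "recol_step V E L (\<lambda>v. \<beta> (f (g v))) \<beta>"
    by (rule agree_step[OF _ \<beta>(1) f0]) (use fg \<beta>(1) col_cong[of V \<beta> "\<lambda>v. \<beta> (f (g v))"] in auto)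
  have "(recol_step V E L)\<^sup>*\<^sup>* \<alpha> \<beta>"
    using s1 m2 s2 by (meson converse_rtranclp_into_rtranclp rtranclp.rtrancl_into_rtrancl)
  then show ?thesis unfolding reconf_equiv_def .
qed

end
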